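(* Let $P_0$ be a distribution of $(Y,\mathbf{X},\mathbf{Z})$ as in the context, with error density $g_0$ and expectation $E_0$. Define \[ I_{\mathrm{add}}=I_{g_0}\,E_0[\mathbf{X}-\boldsymbol\eta(\mathbf{Z})][\mathbf{X}-\boldsymbol\eta(\mathbf{Z})]^\top,\qquad I_{\mathrm{PL}}=I_{g_0}\,E_0[\mathbf{X}-E_0(\mathbf{X}\mid\mathbf{Z})][\mathbf{X}-E_0(\mathbf{X}\mid\mathbf{Z})]^\top . \] Suppose $I_{\mathrm{PL}}$ is positive definite. Then $I_{\mathrm{add}}^{-1}<I_{\mathrm{PL}}^{-1}$ unless \[ E_0[\boldsymbol\eta(\mathbf{Z})-E_0(\mathbf{X}\mid\mathbf{Z})][\boldsymbol\eta(\mathbf{Z})-E_0(\mathbf{X}\mid\mathbf{Z})]^\top=\mathbf{O}, \] where $\mathbf{O}$ is the $p\times p$ zero matrix. Here, for symmetric matrices, $A<B$ means that $B-A$ is non-negative definite and $A\neq B$.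
   Context: Data model: $(Y,\mathbf{X},\mathbf{Z})$ with $\mathbf{X}\in\mathbb{R}^p$ and $\mathbf{Z}\in\mathbb{R}^d$ satisfies $Y=\mathbf{X}^\top\boldsymbol\beta^0+m^0(\mathbf{Z})+\epsilon$. The error $\epsilon$ is independent of $(\mathbf{X},\mathbf{Z})$ and has a symmetric, absolutely continuous density $g_0$ with $I_{g_0}=\int (g_0')^2/g_0<\infty$. $(\mathbf{X},\mathbf{Z})$ has a joint density $q_0$ (with respect to a $\sigma$-finite measure times Lebesgue measure), and $\mathbf{Z}$ has compact support $[0,1]^d$. $\mathcal{H}(q_0)$ is the closed subspace of $L_2(q_0)$ of functions $m(\mathbf{z})=\sum_{j=1}^d m_j(z_j)$ with $E_0 m_j(Z_j)=0$ for all $j$. Set $\boldsymbol\eta=(\eta_1,\ldots,\eta_p)^\top$, where $\eta_j$ is the $L_2(q_0)$-projection of $\mathbf{z}\mapsto E_0(X_j\mid\mathbf{Z}=\mathbf{z})$ onto $\mathcal{H}(q_0)$. Interpretation: $I_{\mathrm{add}}$ is the semi-parametric information bound for $\boldsymbol\beta$ in the partially linear additive model, where $m^0$ is additive. $I_{\mathrm{PL}}$ is the bound in the partially linear model, where $m^0$ is an arbitrary function of $\mathbf{Z}$. *)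

theory Defs
  imports "HOL-Probability.Probability"
begin

definition cond_exp_XZ ::
  "'a measure \<Rightarrow> ('a \<Rightarrow> real^'d) \<Rightarrow> ('a \<Rightarrow> real^'p) \<Rightarrow> 'p \<Rightarrow> 'a \<Rightarrow> real" where
  "cond_exp_XZ M Z X j = real_cond_exp M (vimage_algebra (space M) Z borel) (\<lambda>\<omega>. X \<omega> $ j)"

definition additive_space ::
  "'a measure \<Rightarrow> ('a \<Rightarrow> real^'d) \<Rightarrow> (real^'d \<Rightarrow> real) set" where
  "additive_space M Z = {m. \<exists>mj :: 'd \<Rightarrow> real \<Rightarrow> real.
      (\<forall>z. m z = (\<Sum>j\<in>UNIV. mj j (z $ j))) \<and>
      (\<forall>j. mj j \<in> borel_measurable borel) \<and>
      (\<forall>j. integrable M (\<lambda>\<omega>. (mj j (Z \<omega> $ j))\<^sup>2)) \<and>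
      (\<forall>j. (\<integral>\<omega>. mj j (Z \<omega> $ j) \<partial>M) = 0)}"

definition is_L2_projection ::
  "'a measure \<Rightarrow> ('a \<Rightarrow> real^'d) \<Rightarrow> (real^'d \<Rightarrow> real) set \<Rightarrow> ('a \<Rightarrow> real) \<Rightarrow> (real^'d \<Rightarrow> real) \<Rightarrow> bool" where
  "is_L2_projection M Z H f g \<longleftrightarrow> g \<in> H \<and>
     (\<forall>h\<in>H. (\<integral>\<omega>. (f \<omega> - g (Z \<omega>)) * h (Z \<omega>) \<partial>M) = 0)"

definition fisher_info :: "(real \<Rightarrow> real) \<Rightarrow> (real \<Rightarrow> real) \<Rightarrow> real" where
  "fisher_info g g' = (\<integral>x. (g' x)\<^sup>2 / g x \<partial>lborel)"

definition second_moment :: "'a measure \<Rightarrow> ('a \<Rightarrow> real^'p) \<Rightarrow> real^'p^'p" where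
  "second_moment M U = (\<chi> i k. \<integral>\<omega>. U \<omega> $ i * U \<omega> $ k \<partial>M)"

definition pos_def_mat :: "real^'n^'n \<Rightarrow> bool" where
  "pos_def_mat A \<longleftrightarrow> transpose A = A \<and> (\<forall>v. v \<noteq> 0 \<longrightarrow> v \<bullet> (A *v v) > 0)"

definition nonneg_def_mat :: "real^'n^'n \<Rightarrow> bool" where
  "nonneg_def_mat A \<longleftrightarrow> transpose A = A \<and> (\<forall>v. v \<bullet> (A *v v) \<ge> 0)"

definition loewner_less :: "real^'n^'n \<Rightarrow> real^'n^'n \<Rightarrow> bool" where
  "loewner_less A B \<longleftrightarrow> nonneg_def_mat (B - A) \<and> A \<noteq> B"

end

theory Submission
  imports Defs
begin

lemma transpose_add': "transpose (A + B) = transpose A + (transpose B :: 'a::ring_1^'n^'m)"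
  by (simp add: transpose_def vec_eq_iff)
lemma transpose_diff': "transpose (A - B) = transpose A - (transpose B :: 'a::ring_1^'n^'m)"
  by (simp add: transpose_def vec_eq_iff)

lemma pd_inv:
  fixes A :: "real^'n^'n"
  assumes "pos_def_mat A"
  shows "A ** matrix_inv A = mat 1" "matrix_inv A ** A = mat 1"
proof -
  have "\<forall>x. A *v x = 0 \<longrightarrow> x = 0"
    using assms unfolding pos_def_mat_def by (metis inner_zero_right less_irrefl)
  then obtain B where B: "B ** A = mat 1" using matrix_left_invertible_ker by blast
  then have "A ** B = mat 1" using matrix_left_right_inverse by blast
  then have ex: "\<exists>A'. A ** A' = mat 1 \<and> A' ** A = mat 1" using B by blast
  show "A ** matrix_inv A = mat 1" "matrix_inv A ** A = mat 1"
    using someI_ex[OF ex] unfolding matrix_inv_def by auto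
qed

lemma sym_inner:
  fixes A :: "real^'n^'n"
  assumes "transpose A = A"
  shows "v \<bullet> (A *v w) = (A *v v) \<bullet> w"
  by (metis assms dot_lmul_matrix transpose_matrix_vector)

lemma sym_inv:
  fixes A :: "real^'n^'n"
  assumes "pos_def_mat A"
  shows "transpose (matrix_inv A) = matrix_inv A"
proof -
  have tA: "transpose A = A" using assms pos_def_mat_def by blast
  have "transpose (matrix_inv A) ** A = mat 1"
    using arg_cong[OF pd_inv(1)[OF assms], of transpose] by (simp add: matrix_transpose_mul tA transpose_mat)
  then have "transpose (matrix_inv A) = transpose (matrix_inv A) ** (A ** matrix_inv A)"
    using pd_inv(1)[OF assms] by (simp add: matrix_mul_rid)
  also have "\<dots> = matrix_inv A"
    by (simp add: matrix_mul_assoc \<open>transpose (matrix_inv A) ** A = mat 1\<close> matrix_mul_lid)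
  finally show ?thesis .
qed

lemma loewner_inv:
  fixes A E :: "real^'n^'n"
  assumes A: "pos_def_mat A" and E: "nonneg_def_mat E" and E0: "E \<noteq> 0"
  shows "loewner_less (matrix_inv (A + E)) (matrix_inv A)"
proof -
  define B where "B = A + E"
  have tA: "transpose A = A" using A pos_def_mat_def by blast
  have tE: "transpose E = E" using E nonneg_def_mat_def by blast
  have B: "pos_def_mat B"
    unfolding pos_def_mat_def B_def
  proof safe
    show "transpose (A + E) = A + E" using tA tE by (simp add: transpose_add')
    fix v :: "real^'n" assume "v \<noteq> 0"
    then have "v \<bullet> (A *v v) > 0" using A pos_def_mat_def by blast
    moreover have "v \<bullet> (E *v v) \<ge> 0" using E nonneg_def_mat_def by blast
    ultimately show "v \<bullet> ((A + E) *v v) > 0"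
      by (simp add: matrix_vector_mult_add_rdistrib inner_add_right)
  qed
  have quad: "v \<bullet> ((matrix_inv A - matrix_inv B) *v v) \<ge> 0" for v
  proof -
    define a where "a = matrix_inv A *v v"
    define b where "b = matrix_inv B *v v"
    have Aa: "A *v a = v" unfolding a_def using pd_inv(1)[OF A]
      by (simp add: matrix_vector_mul_assoc)
    have Bb: "B *v b = v" unfolding b_def using pd_inv(1)[OF B]
      by (simp add: matrix_vector_mul_assoc)
    have Ab: "A *v b = v - E *v b" using Bb unfolding B_def
      by (simp add: matrix_vector_mult_add_rdistrib algebra_simps)
    have "(b - a) \<bullet> (A *v (b - a)) \<ge> 0"
      using A unfolding pos_def_mat_def by (cases "b - a = 0") (auto intro: less_imp_le)
    moreover have "(b - a) \<bullet> (A *v (b - a)) = b \<bullet> (A *v b) - 2 * (v \<bullet> b) + v \<bullet> a"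
    proof -
      have "(b - a) \<bullet> (A *v (b - a)) = b \<bullet> (A *v b) - b \<bullet> (A *v a) - a \<bullet> (A *v b) + a \<bullet> (A *v a)"
        by (simp add: matrix_vector_mult_diff_distrib inner_diff_left inner_diff_right)
      also have "a \<bullet> (A *v b) = (A *v a) \<bullet> b" using sym_inner[OF tA] .
      finally show ?thesis using Aa by (simp add: inner_commute)
    qed
    moreover have "v \<bullet> b = b \<bullet> (A *v b) + b \<bullet> (E *v b)"
      using Ab by (simp add: inner_diff_right inner_commute)
    moreover have "b \<bullet> (E *v b) \<ge> 0" using E nonneg_def_mat_def by blast
    ultimately have "v \<bullet> a - v \<bullet> b \<ge> 0" by linarith
    then show ?thesis unfolding a_def b_def
      by (simp add: matrix_vector_mult_diff_rdistrib inner_diff_right)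
  qed
  have neq: "matrix_inv B \<noteq> matrix_inv A"
  proof
    assume eq: "matrix_inv B = matrix_inv A"
    have "A = A ** (matrix_inv B ** B)" using pd_inv(2)[OF B] by (simp add: matrix_mul_rid)
    also have "\<dots> = (A ** matrix_inv A) ** B" by (simp add: eq matrix_mul_assoc)
    also have "\<dots> = B" using pd_inv(1)[OF A] by (simp add: matrix_mul_lid)
    finally have "E = 0" unfolding B_def by simp
    with E0 show False by simp
  qed
  show ?thesis
    unfolding loewner_less_def nonneg_def_mat_def B_def[symmetric]
    using quad neq sym_inv[OF A] sym_inv[OF B] by (simp add: transpose_diff')
qed

lemma vn: "(\<lambda>x::real^'n. x $ j) \<in> borel_measurable borel"
  by (intro borel_measurable_continuous_onI continuous_intros)
lemma vn2[measurable]: "X \<in> borel_measurable M \<Longrightarrow> (\<lambda>w. X w $ j :: real) \<in> borel_measurable M"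
  using measurable_compose[OF _ vn] by blast

definition sq :: "'a measure \<Rightarrow> ('a \<Rightarrow> real) \<Rightarrow> bool" where
  "sq M f \<longleftrightarrow> f \<in> borel_measurable M \<and> integrable M (\<lambda>x. (f x)\<^sup>2)"

lemma sq_prod:
  assumes "sq M f" "sq M g"
  shows "integrable M (\<lambda>x. f x * g x)"
proof (rule Bochner_Integration.integrable_bound)
  show "integrable M (\<lambda>x. (f x)\<^sup>2 + (g x)\<^sup>2)" using assms unfolding sq_def
    by (intro Bochner_Integration.integrable_add) auto
  show "(\<lambda>x. f x * g x) \<in> borel_measurable M" using assms unfolding sq_def by (intro borel_measurable_times) auto
  show "AE x in M. norm (f x * g x) \<le> norm ((f x)\<^sup>2 + (g x)\<^sup>2)"
  proof (rule AE_I2)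
    fix x
    have "2 * \<bar>f x\<bar> * \<bar>g x\<bar> \<le> (f x)\<^sup>2 + (g x)\<^sup>2"
      using sum_squares_bound[of "\<bar>f x\<bar>" "\<bar>g x\<bar>"] by (simp add: power2_abs)
    moreover have "(f x)\<^sup>2 + (g x)\<^sup>2 \<ge> 0" by simp
    moreover have "norm (f x * g x) = \<bar>f x\<bar> * \<bar>g x\<bar>" by (simp add: abs_mult)
    moreover have "norm ((f x)\<^sup>2 + (g x)\<^sup>2) = (f x)\<^sup>2 + (g x)\<^sup>2" by simp
    moreover have "\<bar>f x\<bar> * \<bar>g x\<bar> \<ge> 0" by simp
    ultimately show "norm (f x * g x) \<le> norm ((f x)\<^sup>2 + (g x)\<^sup>2)"
      by linarith
  qed
qed

lemma sq_add:
  assumes "sq M f" "sq M g"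
  shows "sq M (\<lambda>x. f x + g x)"
proof -
  have "integrable M (\<lambda>x. (f x)\<^sup>2 + (g x)\<^sup>2 + 2 * (f x * g x))"
    using assms sq_prod[OF assms] unfolding sq_def
    by (intro Bochner_Integration.integrable_add integrable_mult_right) auto
  moreover have "(\<lambda>x. (f x)\<^sup>2 + (g x)\<^sup>2 + 2 * (f x * g x)) = (\<lambda>x. (f x + g x)\<^sup>2)"
    by (auto simp: power2_eq_square algebra_simps)
  moreover have "(\<lambda>x. f x + g x) \<in> borel_measurable M" using assms unfolding sq_def by (intro borel_measurable_add) auto
  ultimately show ?thesis unfolding sq_def by simp
qed

lemma sq_neg:
  assumes "sq M f" shows "sq M (\<lambda>x. - f x)"
  using assms unfolding sq_def by (simp add: measurable_compose[OF _ borel_measurable_uminus])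

lemma sq_diff:
  assumes "sq M f" "sq M g"
  shows "sq M (\<lambda>x. f x - g x)"
  using sq_add[OF assms(1) sq_neg[OF assms(2)]] by simp

lemma sq_sum:
  assumes "\<And>i. i \<in> S \<Longrightarrow> sq M (f i)"
  shows "sq M (\<lambda>x. \<Sum>i\<in>S. f i x)"
  using assms
proof (induction S rule: infinite_finite_induct)
  case (infinite A) then show ?case by (simp add: sq_def)
next
  case empty then show ?case by (simp add: sq_def)
next
  case (insert a A)
  then show ?case using sq_add[of M "f a" "\<lambda>x. \<Sum>i\<in>A. f i x"] by simp
qed

lemma sm_sym: "transpose (second_moment M U) = second_moment M U"
  by (simp add: transpose_def second_moment_def vec_eq_iff mult.commute)

lemma sm_quad:
  fixes U :: "'a \<Rightarrow> real^'p"
  assumes "\<And>i. sq M (\<lambda>\<omega>. U \<omega> $ i)"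
  shows "v \<bullet> (second_moment M U *v v) \<ge> 0"
proof -
  have int: "integrable M (\<lambda>\<omega>. v $ i * (v $ k * (U \<omega> $ i * U \<omega> $ k)))" for i k
    using sq_prod[OF assms assms] by simp
  have "v \<bullet> (second_moment M U *v v) = (\<Sum>i\<in>UNIV. \<Sum>k\<in>UNIV. v $ i * (v $ k * (\<integral>\<omega>. U \<omega> $ i * U \<omega> $ k \<partial>M)))"
    by (simp add: inner_vec_def matrix_vector_mult_def second_moment_def sum_distrib_left mult.commute mult.left_commute)
  also have "\<dots> = (\<Sum>i\<in>UNIV. \<Sum>k\<in>UNIV. (\<integral>\<omega>. v $ i * (v $ k * (U \<omega> $ i * U \<omega> $ k)) \<partial>M))"
    by simp
  also have "\<dots> = (\<integral>\<omega>. (\<Sum>i\<in>UNIV. \<Sum>k\<in>UNIV. v $ i * (v $ k * (U \<omega> $ i * U \<omega> $ k))) \<partial>M)"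
    using int by (simp add: Bochner_Integration.integral_sum)
  also have "\<dots> = (\<integral>\<omega>. (\<Sum>i\<in>UNIV. v $ i * U \<omega> $ i)\<^sup>2 \<partial>M)"
    by (simp add: power2_eq_square sum_product mult.commute mult.left_commute)
  also have "\<dots> \<ge> 0" by simp
  finally show ?thesis .
qed

lemma transpose_scaleR': "transpose (c *\<^sub>R A) = c *\<^sub>R transpose (A :: real^'n^'m)"
  by (simp add: transpose_def vec_eq_iff)

theorem theorem2:
  fixes M :: "'a measure"
    and Y :: "'a \<Rightarrow> real" and X :: "'a \<Rightarrow> real^'p" and Z :: "'a \<Rightarrow> real^'d"
    and eps :: "'a \<Rightarrow> real"
    and beta0 :: "real^'p" and m0 :: "real^'d \<Rightarrow> real"
    and g0 g0' :: "real \<Rightarrow> real"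
    and eta :: "'p \<Rightarrow> real^'d \<Rightarrow> real"
  assumes prob: "prob_space M"
    and X_meas: "X \<in> borel_measurable M" and Z_meas: "Z \<in> borel_measurable M"
    and X_L2: "\<And>j. integrable M (\<lambda>\<omega>. (X \<omega> $ j)\<^sup>2)"
    and m0_meas: "m0 \<in> borel_measurable borel"
    and model: "\<And>\<omega>. \<omega> \<in> space M \<Longrightarrow> Y \<omega> = X \<omega> \<bullet> beta0 + m0 (Z \<omega>) + eps \<omega>"
    and eps_dens: "distributed M lborel eps (\<lambda>x. ennreal (g0 x))"
    and eps_indep: "\<And>A B. A \<in> sets (borel :: real measure) \<Longrightarrow> B \<in> sets (borel :: ((real^'p) \<times> (real^'d)) measure) \<Longrightarrow>
         measure M {\<omega>\<in>space M. eps \<omega> \<in> A \<and> (X \<omega>, Z \<omega>) \<in> B}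
           = measure M {\<omega>\<in>space M. eps \<omega> \<in> A} * measure M {\<omega>\<in>space M. (X \<omega>, Z \<omega>) \<in> B}"
    and g0_nonneg: "\<And>x. g0 x \<ge> 0"
    and g0_symm: "\<And>x. g0 (- x) = g0 x"
    and g0'_loc_int: "\<And>a b. set_integrable lborel {a..b} g0'"
    and g0_abs_cont: "\<And>x. g0 x = g0 0 + (LBINT t=0..x. g0' t)"
    and fisher_finite: "integrable lborel (\<lambda>x. (g0' x)\<^sup>2 / g0 x)"
    and joint_dens: "\<exists>N q0. sigma_finite_measure N \<and> sets N = sets (borel :: (real^'p) measure) \<and>
                       distributed M (N \<Otimes>\<^sub>M lborel) (\<lambda>\<omega>. (X \<omega>, Z \<omega>)) q0"
    and Z_support: "\<And>\<omega>. \<omega> \<in> space M \<Longrightarrow> Z \<omega> \<in> cbox 0 1"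
    and eta_proj: "\<And>j. is_L2_projection M Z (additive_space M Z) (cond_exp_XZ M Z X j) (eta j)"
    and PL_pd: "pos_def_mat (fisher_info g0 g0' *\<^sub>R
                  second_moment M (\<lambda>\<omega>. \<chi> j. X \<omega> $ j - cond_exp_XZ M Z X j \<omega>))"
    and nonzero: "second_moment M (\<lambda>\<omega>. \<chi> j. eta j (Z \<omega>) - cond_exp_XZ M Z X j \<omega>) \<noteq> 0"
  shows "loewner_less
           (matrix_inv (fisher_info g0 g0' *\<^sub>R
               second_moment M (\<lambda>\<omega>. \<chi> j. X \<omega> $ j - eta j (Z \<omega>))))
           (matrix_inv (fisher_info g0 g0' *\<^sub>R
               second_moment M (\<lambda>\<omega>. \<chi> j. X \<omega> $ j - cond_exp_XZ M Z X j \<omega>)))"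

proof -
  interpret prob_space M by (rule prob)
  define F where "F = vimage_algebra (space M) Z borel"
  have subalg: "subalgebra M F"
    unfolding subalgebra_def F_def
  proof
    show "space (vimage_algebra (space M) Z borel) = space M" by simp
    have "sets (vimage_algebra (space M) Z borel) = {Z -` A \<inter> space M |A. A \<in> sets borel}"
      by (rule sets_vimage_algebra2) simp
    then show "sets (vimage_algebra (space M) Z borel) \<subseteq> sets M"
      using measurable_sets[OF Z_meas] by auto
  qed
  interpret fsub: finite_measure_subalgebra M F
    by unfold_locales (rule subalg)
  define C where "C j \<omega> = cond_exp_XZ M Z X j \<omega>" for j \<omega>
  have C_eq: "C j = real_cond_exp M F (\<lambda>\<omega>. X \<omega> $ j)" for j
    unfolding C_def cond_exp_XZ_def F_def by (rule ext) simp
  have sqX: "sq M (\<lambda>\<omega>. X \<omega> $ j)" for j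
    using X_L2 X_meas unfolding sq_def by simp
  have intX: "integrable M (\<lambda>\<omega>. X \<omega> $ j)" for j
    by (rule square_integrable_imp_integrable) (use X_L2 X_meas in auto)
  have sqC: "sq M (C j)" for j
  proof -
    have "integrable M (\<lambda>x. power2 (real_cond_exp M F (\<lambda>\<omega>. X \<omega> $ j) x))"
      by (rule fsub.integrable_convex_cond_exp[where I=UNIV])
         (use intX X_L2 convex_power2 in auto)
    then show ?thesis unfolding sq_def C_eq by simp
  qed
  have CF: "C j \<in> borel_measurable F" for j
    unfolding C_eq by simp
  have eta_F: "(\<lambda>\<omega>. eta j (Z \<omega>)) \<in> borel_measurable F \<and> sq M (\<lambda>\<omega>. eta j (Z \<omega>))" for j
  proof -
    have "eta j \<in> additive_space M Z"
      using eta_proj[of j] unfolding is_L2_projection_def by blast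
    then obtain mj :: "'d \<Rightarrow> real \<Rightarrow> real" where
      eq: "\<And>z. eta j z = (\<Sum>k\<in>UNIV. mj k (z $ k))"
      and mm: "\<And>k. mj k \<in> borel_measurable borel"
      and mi: "\<And>k. integrable M (\<lambda>\<omega>. (mj k (Z \<omega> $ k))\<^sup>2)"
      unfolding additive_space_def by blast
    have etam: "eta j \<in> borel_measurable borel"
      unfolding eq[abs_def] using mm by measurable
    have "Z \<in> F \<rightarrow>\<^sub>M borel" unfolding F_def
      by (rule measurable_vimage_algebra1) simp
    then have m1: "(\<lambda>\<omega>. eta j (Z \<omega>)) \<in> borel_measurable F"
      using measurable_compose[OF _ etam] by blast
    have "sq M (\<lambda>\<omega>. \<Sum>k\<in>UNIV. mj k (Z \<omega> $ k))"
    proof (rule sq_sum)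
      fix k :: 'd
      have "(\<lambda>\<omega>. mj k (Z \<omega> $ k)) \<in> borel_measurable M"
        using mm Z_meas by measurable
      then show "sq M (\<lambda>\<omega>. mj k (Z \<omega> $ k))" using mi sq_def by blast
    qed
    then show ?thesis using m1 eq by simp
  qed
  define D where "D j \<omega> = eta j (Z \<omega>) - C j \<omega>" for j \<omega>
  define U where "U j \<omega> = X \<omega> $ j - C j \<omega>" for j \<omega>
  have sqD: "sq M (D j)" for j
    unfolding D_def[abs_def] using sq_diff[OF conjunct2[OF eta_F] sqC] .
  have sqU: "sq M (U j)" for j
    unfolding U_def[abs_def] using sq_diff[OF sqX sqC] .
  have DF: "D j \<in> borel_measurable F" for j
    unfolding D_def[abs_def] using conjunct1[OF eta_F] CF by measurable
  have orth: "(\<integral>\<omega>. U i \<omega> * D k \<omega> \<partial>M) = 0" for i k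
  proof -
    have i1: "integrable M (\<lambda>\<omega>. D k \<omega> * X \<omega> $ i)" using sq_prod[OF sqD sqX] .
    have "(\<integral>\<omega>. D k \<omega> * C i \<omega> \<partial>M) = (\<integral>\<omega>. D k \<omega> * X \<omega> $ i \<partial>M)"
      unfolding C_eq by (rule fsub.real_cond_exp_intg(2)[OF i1 DF]) (use X_meas in measurable)
    moreover have "(\<integral>\<omega>. U i \<omega> * D k \<omega> \<partial>M) = (\<integral>\<omega>. D k \<omega> * X \<omega> $ i \<partial>M) - (\<integral>\<omega>. D k \<omega> * C i \<omega> \<partial>M)"
      unfolding U_def using i1 sq_prod[OF sqD sqC]
      by (subst Bochner_Integration.integral_diff[symmetric]) (auto simp: algebra_simps)
    ultimately show ?thesis by simp
  qed
  define SPL where "SPL = second_moment M (\<lambda>\<omega>. \<chi> j. X \<omega> $ j - cond_exp_XZ M Z X j \<omega>)"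
  define SD where "SD = second_moment M (\<lambda>\<omega>. \<chi> j. eta j (Z \<omega>) - cond_exp_XZ M Z X j \<omega>)"
  define SA where "SA = second_moment M (\<lambda>\<omega>. \<chi> j. X \<omega> $ j - eta j (Z \<omega>))"
  have SPL_e: "SPL $ i $ k = (\<integral>\<omega>. U i \<omega> * U k \<omega> \<partial>M)" for i k
    unfolding SPL_def second_moment_def U_def C_def by simp
  have SD_e: "SD $ i $ k = (\<integral>\<omega>. D i \<omega> * D k \<omega> \<partial>M)" for i k
    unfolding SD_def second_moment_def D_def C_def by simp
  have SA_e: "SA $ i $ k = (\<integral>\<omega>. (U i \<omega> - D i \<omega>) * (U k \<omega> - D k \<omega>) \<partial>M)" for i k
    unfolding SA_def second_moment_def D_def U_def by (simp add: algebra_simps)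
  have SA_eq: "SA = SPL + SD"
  proof (simp add: vec_eq_iff, intro allI)
    fix i k
    have eq: "(\<lambda>\<omega>. (U i \<omega> - D i \<omega>) * (U k \<omega> - D k \<omega>)) =
      (\<lambda>\<omega>. (U i \<omega> * U k \<omega> + D i \<omega> * D k \<omega>) - (U i \<omega> * D k \<omega> + U k \<omega> * D i \<omega>))"
      by (auto simp: algebra_simps)
    have "SA $ i $ k = (\<integral>\<omega>. U i \<omega> * U k \<omega> \<partial>M) + (\<integral>\<omega>. D i \<omega> * D k \<omega> \<partial>M)
        - ((\<integral>\<omega>. U i \<omega> * D k \<omega> \<partial>M) + (\<integral>\<omega>. U k \<omega> * D i \<omega> \<partial>M))"
      unfolding SA_e eq
      using sq_prod[OF sqU sqU] sq_prod[OF sqD sqD] sq_prod[OF sqU sqD]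
      by (simp add: Bochner_Integration.integral_diff Bochner_Integration.integral_add)
    then show "SA $ i $ k = SPL $ i $ k + SD $ i $ k"
      using orth SPL_e SD_e by simp
  qed
  have sqUv: "sq M (\<lambda>\<omega>. (\<chi> j. X \<omega> $ j - cond_exp_XZ M Z X j \<omega>) $ i)" for i
    using sqU[of i] unfolding U_def C_def by simp
  have sqDv: "sq M (\<lambda>\<omega>. (\<chi> j. eta j (Z \<omega>) - cond_exp_XZ M Z X j \<omega>) $ i)" for i
    using sqD[of i] unfolding D_def C_def by simp
  have SPL_q: "v \<bullet> (SPL *v v) \<ge> 0" for v
    unfolding SPL_def by (rule sm_quad[OF sqUv])
  have SD_q: "v \<bullet> (SD *v v) \<ge> 0" for v
    unfolding SD_def by (rule sm_quad[OF sqDv])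
  define c where "c = fisher_info g0 g0'"
  have cpos: "c > 0"
  proof -
    have "(1::real^'p) \<noteq> 0" by (simp add: vec_eq_iff)
    then have "(1::real^'p) \<bullet> ((c *\<^sub>R SPL) *v 1) > 0"
      using PL_pd unfolding pos_def_mat_def c_def SPL_def by blast
    then have "c * ((1::real^'p) \<bullet> (SPL *v 1)) > 0"
      by (simp add: scaleR_matrix_vector_assoc[symmetric])
    moreover have "(1::real^'p) \<bullet> (SPL *v 1) \<ge> 0" by (rule SPL_q)
    ultimately show ?thesis
      by (metis mult_nonpos_nonneg not_le)
  qed
  have A: "pos_def_mat (c *\<^sub>R SPL)" using PL_pd unfolding c_def SPL_def .
  have E: "nonneg_def_mat (c *\<^sub>R SD)"
    unfolding nonneg_def_mat_def
  proof safe
    show "transpose (c *\<^sub>R SD) = c *\<^sub>R SD"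
      by (simp add: transpose_scaleR' SD_def sm_sym)
    fix v :: "real^'p"
    show "v \<bullet> ((c *\<^sub>R SD) *v v) \<ge> 0"
      using SD_q[of v] cpos by (simp add: scaleR_matrix_vector_assoc[symmetric])
  qed
  have E0: "c *\<^sub>R SD \<noteq> 0" using cpos nonzero unfolding SD_def by simp
  have "loewner_less (matrix_inv (c *\<^sub>R SPL + c *\<^sub>R SD)) (matrix_inv (c *\<^sub>R SPL))"
    by (rule loewner_inv[OF A E E0])
  then show ?thesis
    unfolding c_def[symmetric] SPL_def[symmetric] SA_def[symmetric] SA_eq
    by (simp add: scaleR_add_right)
qed

end
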